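(* Let $f:\mathcal{S}\to\mathbb{R}$ be continuously differentiable with $f^\star:=\inf_{X\in\mathcal{S}}f(X)>-\infty$, suppose $f$ is layer-wise $(L^0,L^1)$-smooth with constants $L^0,L^1\in\mathbb{R}^p_+$, and suppose $f$ satisfies the layer-wise Polyak–Łojasiewicz condition with constant $\mu>0$: $\sum_{i=1}^p\|\nabla_i f(X)\|^2_{(i)\star}\ge 2\mu(f(X)-f^\star)$ for all $X\in\mathcal{S}$. Fix $\varepsilon>0$ and let $X^0,X^1,\dots$ be the iterates of deterministic Gluon with radii $t_i^k=\frac{\|\nabla_i f(X^k)\|_{(i)\star}}{L^0_i+L^1_i\|\nabla_i f(X^k)\|_{(i)\star}}$ (assumed well defined, with $t_i^k:=0$ when $\nabla_i f(X^k)=0$). Let $\Delta^0:=f(X^0)-f^\star$, $L^0_{\max}:=\max_iL^0_i$, $L^1_{\max}:=\max_iL^1_i$. (1) With $K:=\left\lceil\frac{\Delta^0\sum_{i=1}^pL^0_i}{\mu\varepsilon}+\frac{\sqrt2L^1_{\max}\Delta^0}{\sqrt{\mu\varepsilon}}\right\rceil$ (provided $K\ge1$), $\min_{k=0,\dots,K-1}f(X^k)-f^\star\le\varepsilon$. (2) If $L^1_i=0$ for all $i=1,\dots,p$, then with $K:=\left\lceil\frac{L^0_{\max}}{\mu}\log\frac{\Delta^0}{\varepsilon}\right\rceil$, $f(X^K)-f^\star\le\varepsilon$.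
   Context: $\mathcal{S}=\mathcal{S}_1\times\cdots\times\mathcal{S}_p$ with $\mathcal{S}_i=\mathbb{R}^{m_i\times n_i}$; an element is written $X=[X_1,\dots,X_p]$. Each $\mathcal{S}_i$ carries the trace inner product $\langle X_i,Y_i\rangle_{(i)}=\operatorname{tr}(X_i^\top Y_i)$ and an arbitrary norm $\|\cdot\|_{(i)}$ with dual norm $\|Y_i\|_{(i)\star}=\sup_{\|Z_i\|_{(i)}\le 1}\langle Y_i,Z_i\rangle_{(i)}$. $\nabla_i f(X)$ is the gradient block corresponding to $X_i$. Layer-wise $(L^0,L^1)$-smoothness: for all $i$ and $X,Y\in\mathcal{S}$, $\|\nabla_i f(X)-\nabla_i f(Y)\|_{(i)\star}\le (L^0_i+L^1_i\|\nabla_i f(X)\|_{(i)\star})\|X_i-Y_i\|_{(i)}$. Deterministic Gluon: for each $k$ and $i$, $X_i^{k+1}\in\arg\min\{\langle \nabla_i f(X^k),X_i\rangle_{(i)}: \|X_i-X_i^k\|_{(i)}\le t_i^k\}$ (any minimizer), $X^{k+1}=[X_1^{k+1},\dots,X_p^{k+1}]$. $\log$ is the natural logarithm. *)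

theory Defs
  imports "HOL-Analysis.Analysis"
begin

text \<open>Matrices in R^(m x n) are represented as functions nat => nat => real
  vanishing outside the index range {..<m} x {..<n}.\<close>

definition matsp :: "nat \<Rightarrow> nat \<Rightarrow> (nat \<Rightarrow> nat \<Rightarrow> real) set" where
  "matsp m n = {A. \<forall>r c. \<not> (r < m \<and> c < n) \<longrightarrow> A r c = 0}"

text \<open>Trace inner product tr(A^T B), written out: (A^T B)_{cc} = sum_r A_rc B_rc.\<close>
definition trinner :: "nat \<Rightarrow> nat \<Rightarrow> (nat \<Rightarrow> nat \<Rightarrow> real) \<Rightarrow> (nat \<Rightarrow> nat \<Rightarrow> real) \<Rightarrow> real" where
  "trinner m n A B = (\<Sum>c<n. \<Sum>r<m. A r c * B r c)"

definition is_norm_on :: "(nat \<Rightarrow> nat \<Rightarrow> real) set \<Rightarrow> ((nat \<Rightarrow> nat \<Rightarrow> real) \<Rightarrow> real) \<Rightarrow> bool" where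
  "is_norm_on V N \<longleftrightarrow>
     (\<forall>A\<in>V. 0 \<le> N A) \<and>
     (\<forall>A\<in>V. N A = 0 \<longleftrightarrow> A = (\<lambda>_ _. 0)) \<and>
     (\<forall>A\<in>V. \<forall>a. N (\<lambda>r c. a * A r c) = \<bar>a\<bar> * N A) \<and>
     (\<forall>A\<in>V. \<forall>B\<in>V. N (\<lambda>r c. A r c + B r c) \<le> N A + N B)"

definition dualnorm :: "nat \<Rightarrow> nat \<Rightarrow> ((nat \<Rightarrow> nat \<Rightarrow> real) \<Rightarrow> real) \<Rightarrow> (nat \<Rightarrow> nat \<Rightarrow> real) \<Rightarrow> real" where
  "dualnorm m n N Y = (SUP Z\<in>{Z\<in>matsp m n. N Z \<le> 1}. trinner m n Y Z)"

text \<open>The product space S = S_1 x ... x S_p is represented as real^'d, where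
  idx i r c is the coordinate carrying entry (r,c) of block i; idx is a bijection from
  the valid triples onto the coordinates. The Euclidean inner product of real^'d
  then coincides with the sum of the blockwise trace inner products.\<close>

definition blk :: "(nat \<Rightarrow> nat \<Rightarrow> nat \<Rightarrow> 'd) \<Rightarrow> nat \<Rightarrow> nat \<Rightarrow> nat \<Rightarrow> (real ^ 'd) \<Rightarrow> (nat \<Rightarrow> nat \<Rightarrow> real)" where
  "blk idx m n i X = (\<lambda>r c. if r < m \<and> c < n then X $ idx i r c else 0)"

definition layout :: "nat \<Rightarrow> (nat \<Rightarrow> nat) \<Rightarrow> (nat \<Rightarrow> nat) \<Rightarrow> (nat \<Rightarrow> nat \<Rightarrow> nat \<Rightarrow> 'd::finite) \<Rightarrow> bool" where
  "layout p m n idx \<longleftrightarrow>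
     bij_betw (\<lambda>(i, r, c). idx i r c) {(i, r, c). i < p \<and> r < m i \<and> c < n i} (UNIV :: 'd set)"

end

theory Submission
  imports Defs
begin

lemma matsp_blk: "blk idx m n i X \<in> matsp m n"
  by (simp add: matsp_def blk_def)
lemma matsp_diff: "A \<in> matsp m n \<Longrightarrow> B \<in> matsp m n \<Longrightarrow> (\<lambda>r c. A r c - B r c) \<in> matsp m n"
  by (simp add: matsp_def)
lemma matsp_scale: "A \<in> matsp m n \<Longrightarrow> (\<lambda>r c. a * A r c) \<in> matsp m n"
  by (simp add: matsp_def)
lemma matsp_zero: "(\<lambda>_ _. 0) \<in> matsp m n"
  by (simp add: matsp_def)
lemma matsp_sum: "finite F \<Longrightarrow> \<forall>k\<in>F. A k \<in> matsp m n \<Longrightarrow> (\<lambda>r c. \<Sum>k\<in>F. A k r c) \<in> matsp m n"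
  by (simp add: matsp_def)

lemma blk_diff: "blk idx m n i (x - y) = (\<lambda>r c. blk idx m n i x r c - blk idx m n i y r c)"
  by (auto simp: blk_def fun_eq_iff)

context
  fixes N and m n :: nat
  assumes nN: "is_norm_on (matsp m n) N"
begin

lemma nn: "A \<in> matsp m n \<Longrightarrow> 0 \<le> N A"
  using nN by (simp add: is_norm_on_def)
lemma nzero: "N (\<lambda>_ _. 0) = 0"
  using nN matsp_zero[of m n] by (simp add: is_norm_on_def)
lemma nzero_iff: "A \<in> matsp m n \<Longrightarrow> N A = 0 \<longleftrightarrow> A = (\<lambda>_ _. 0)"
  using nN by (simp add: is_norm_on_def)
lemma nscale: "A \<in> matsp m n \<Longrightarrow> N (\<lambda>r c. a * A r c) = \<bar>a\<bar> * N A"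
  using nN by (simp add: is_norm_on_def)
lemma ntri: "A \<in> matsp m n \<Longrightarrow> B \<in> matsp m n \<Longrightarrow> N (\<lambda>r c. A r c + B r c) \<le> N A + N B"
  using nN by (simp add: is_norm_on_def)
lemma nswap: "A \<in> matsp m n \<Longrightarrow> B \<in> matsp m n \<Longrightarrow> N (\<lambda>r c. A r c - B r c) = N (\<lambda>r c. B r c - A r c)"
proof -
  assume a: "A \<in> matsp m n" "B \<in> matsp m n"
  have "N (\<lambda>r c. A r c - B r c) = N (\<lambda>r c. (-1) * (B r c - A r c))" by simp
  also have "\<dots> = N (\<lambda>r c. B r c - A r c)" using nscale[OF matsp_diff[OF a(2) a(1)], of "-1"] by simp
  finally show ?thesis .
qed
lemma nsum: "finite F \<Longrightarrow> \<forall>k\<in>F. A k \<in> matsp m n \<Longrightarrow> N (\<lambda>r c. \<Sum>k\<in>F. A k r c) \<le> (\<Sum>k\<in>F. N (A k))"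
proof (induction F rule: finite_induct)
  case empty
  then show ?case using nzero by simp
next
  case (insert x F)
  have "N (\<lambda>r c. \<Sum>k\<in>insert x F. A k r c) = N (\<lambda>r c. A x r c + (\<Sum>k\<in>F. A k r c))"
    using insert by simp
  also have "\<dots> \<le> N (A x) + N (\<lambda>r c. \<Sum>k\<in>F. A k r c)"
    using ntri[of "A x" "\<lambda>r c. \<Sum>k\<in>F. A k r c"] matsp_sum[of F A m n] insert by simp
  also have "\<dots> \<le> N (A x) + (\<Sum>k\<in>F. N (A k))" using insert by simp
  finally show ?case using insert by simp
qed
end

lemma trinner_zero: "trinner m n (\<lambda>_ _. 0) Z = 0"
  by (simp add: trinner_def)
lemma trinner_diff: "trinner m n G (\<lambda>r c. A r c - B r c) = trinner m n G A - trinner m n G B"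
  by (simp add: trinner_def algebra_simps sum_subtractf)
lemma trinner_scale: "trinner m n G (\<lambda>r c. a * A r c) = a * trinner m n G A"
  by (simp add: trinner_def algebra_simps sum_distrib_left)


locale lay_setup =
  fixes p :: nat and m n :: "nat \<Rightarrow> nat"
    and idx :: "nat \<Rightarrow> nat \<Rightarrow> nat \<Rightarrow> 'd::finite"
    and nrm :: "nat \<Rightarrow> (nat \<Rightarrow> nat \<Rightarrow> real) \<Rightarrow> real"
  assumes lay: "layout p m n idx"
    and norms: "\<forall>i<p. is_norm_on (matsp (m i) (n i)) (nrm i)"
begin

abbreviation "S0 \<equiv> {(i, r, c). i < p \<and> r < m i \<and> c < n i}"
abbreviation "FF \<equiv> (\<lambda>(i, r, c). idx i r c)"

lemma bij: "bij_betw FF S0 UNIV"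
  using lay by (simp add: layout_def)

lemma S0_eq: "S0 = (SIGMA i:{..<p}. {..<m i} \<times> {..<n i})"
  by auto

lemma inner_blk: "x \<bullet> y = (\<Sum>i<p. trinner (m i) (n i) (blk idx (m i) (n i) i x) (blk idx (m i) (n i) i y))"
proof -
  have "x \<bullet> y = (\<Sum>j\<in>UNIV. x $ j * y $ j)" by (simp add: inner_vec_def)
  also have "\<dots> = (\<Sum>t\<in>S0. x $ FF t * y $ FF t)"
    using sum.reindex_bij_betw[OF bij, of "\<lambda>j. x $ j * y $ j"] by simp
  also have "\<dots> = (\<Sum>t\<in>(SIGMA i:{..<p}. {..<m i} \<times> {..<n i}). x $ FF t * y $ FF t)"
    using S0_eq by simp
  also have "\<dots> = (\<Sum>i<p. \<Sum>rc\<in>{..<m i} \<times> {..<n i}. x $ idx i (fst rc) (snd rc) * y $ idx i (fst rc) (snd rc))"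
    by (subst sum.Sigma) (auto simp: case_prod_beta intro!: sum.cong)
  also have "\<dots> = (\<Sum>i<p. \<Sum>r<m i. \<Sum>c<n i. x $ idx i r c * y $ idx i r c)"
    by (simp add: sum.cartesian_product case_prod_beta)
  also have "\<dots> = (\<Sum>i<p. \<Sum>c<n i. \<Sum>r<m i. x $ idx i r c * y $ idx i r c)"
    by (simp add: sum.swap[of _ "{..<m _}"])
  also have "\<dots> = (\<Sum>i<p. trinner (m i) (n i) (blk idx (m i) (n i) i x) (blk idx (m i) (n i) i y))"
    by (simp add: trinner_def blk_def)
  finally show ?thesis .
qed

lemma blk_axis_sum: "blk idx mm nn i x = (\<lambda>r c. \<Sum>j\<in>UNIV. x $ j * blk idx mm nn i (axis j 1) r c)"
proof (rule ext, rule ext)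
  fix r c
  show "blk idx mm nn i x r c = (\<Sum>j\<in>UNIV. x $ j * blk idx mm nn i (axis j 1) r c)"
  proof (cases "r < mm \<and> c < nn")
    case True
    have "(\<Sum>j\<in>UNIV. x $ j * blk idx mm nn i (axis j 1) r c) = (\<Sum>j\<in>UNIV. if idx i r c = j then x $ j else 0)"
      by (rule sum.cong) (auto simp: blk_def axis_def True)
    then show ?thesis by (simp add: blk_def True)
  next
    case False
    then show ?thesis by (auto simp: blk_def)
  qed
qed

lemma blk_scale: "blk idx mm nn i (a *\<^sub>R x) = (\<lambda>r c. a * blk idx mm nn i x r c)"
  by (auto simp: fun_eq_iff blk_def)

lemma blk_add: "blk idx mm nn i (x + y) = (\<lambda>r c. blk idx mm nn i x r c + blk idx mm nn i y r c)"
  by (auto simp: fun_eq_iff blk_def)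

lemma nu_upper:
  assumes i: "i < p"
  shows "nrm i (blk idx (m i) (n i) i x) \<le> (\<Sum>j\<in>UNIV. nrm i (blk idx (m i) (n i) i (axis j 1))) * norm x"
proof -
  have nN: "is_norm_on (matsp (m i) (n i)) (nrm i)" using norms i by simp
  have "nrm i (blk idx (m i) (n i) i x) = nrm i (\<lambda>r c. \<Sum>j\<in>UNIV. x $ j * blk idx (m i) (n i) i (axis j 1) r c)"
    by (subst blk_axis_sum) simp
  also have "\<dots> \<le> (\<Sum>j\<in>UNIV. nrm i (\<lambda>r c. x $ j * blk idx (m i) (n i) i (axis j 1) r c))"
    by (rule nsum[OF nN]) (auto intro: matsp_scale matsp_blk)
  also have "\<dots> = (\<Sum>j\<in>UNIV. \<bar>x $ j\<bar> * nrm i (blk idx (m i) (n i) i (axis j 1)))"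
    by (simp add: nscale[OF nN matsp_blk])
  also have "\<dots> \<le> (\<Sum>j\<in>UNIV. norm x * nrm i (blk idx (m i) (n i) i (axis j 1)))"
    by (rule sum_mono) (simp add: mult_right_mono component_le_norm_cart nn[OF nN matsp_blk])
  also have "\<dots> = (\<Sum>j\<in>UNIV. nrm i (blk idx (m i) (n i) i (axis j 1))) * norm x"
    by (simp add: sum_distrib_left mult.commute)
  finally show ?thesis .
qed

lemma nu_lip:
  assumes i: "i < p"
  shows "\<bar>nrm i (blk idx (m i) (n i) i x) - nrm i (blk idx (m i) (n i) i y)\<bar>
     \<le> (\<Sum>j\<in>UNIV. nrm i (blk idx (m i) (n i) i (axis j 1))) * norm (x - y)"
proof -
  have nN: "is_norm_on (matsp (m i) (n i)) (nrm i)" using norms i by simp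
  have a: "nrm i (blk idx (m i) (n i) i u) - nrm i (blk idx (m i) (n i) i v)
     \<le> (\<Sum>j\<in>UNIV. nrm i (blk idx (m i) (n i) i (axis j 1))) * norm (u - v)" for u v
  proof -
    have "nrm i (blk idx (m i) (n i) i u) = nrm i (blk idx (m i) (n i) i (v + (u - v)))" by simp
    also have "\<dots> \<le> nrm i (blk idx (m i) (n i) i v) + nrm i (blk idx (m i) (n i) i (u - v))"
      unfolding blk_add by (rule ntri[OF nN matsp_blk matsp_blk])
    finally show ?thesis using nu_upper[OF i, of "u - v"] by simp
  qed
  show ?thesis using a[of x y] a[of y x] by (simp add: abs_le_iff norm_minus_commute)
qed

lemma nu_cont:
  assumes i: "i < p"
  shows "continuous_on UNIV (\<lambda>x. nrm i (blk idx (m i) (n i) i x))"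
proof -
  let ?M = "(\<Sum>j\<in>UNIV. nrm i (blk idx (m i) (n i) i (axis j 1)))"
  have nN: "is_norm_on (matsp (m i) (n i)) (nrm i)" using norms i by simp
  have "?M \<ge> 0" by (rule sum_nonneg) (simp add: nn[OF nN matsp_blk])
  then have "?M-lipschitz_on UNIV (\<lambda>x. nrm i (blk idx (m i) (n i) i x))"
    by (intro lipschitz_onI) (auto simp: dist_real_def dist_norm nu_lip[OF i])
  then show ?thesis by (rule lipschitz_on_continuous_on)
qed

definition emb :: "nat \<Rightarrow> (nat \<Rightarrow> nat \<Rightarrow> real) \<Rightarrow> real ^ 'd" where
  "emb i Z = (\<chi> j. (case the_inv_into S0 FF j of (i', r, c) \<Rightarrow> if i' = i then Z r c else 0))"

lemma emb_at: "i < p \<Longrightarrow> r < m i \<Longrightarrow> c < n i \<Longrightarrow> emb i Z $ idx i r c = Z r c"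
proof -
  assume a: "i < p" "r < m i" "c < n i"
  have "the_inv_into S0 FF (FF (i, r, c)) = (i, r, c)"
    by (rule the_inv_into_f_f) (use bij a in \<open>auto simp: bij_betw_def\<close>)
  then show ?thesis by (simp add: emb_def)
qed

lemma emb_supp: "emb i Z $ j \<noteq> 0 \<Longrightarrow> \<exists>r c. r < m i \<and> c < n i \<and> j = idx i r c"
proof -
  assume a: "emb i Z $ j \<noteq> 0"
  define g where "g = the_inv_into S0 FF j"
  obtain i' r c where g: "g = (i', r, c)" by (cases g) blast
  have inj: "inj_on FF S0" and surj: "FF ` S0 = UNIV" using bij by (auto simp: bij_betw_def)
  have "g \<in> S0" unfolding g_def by (rule the_inv_into_into[OF inj]) (use surj in auto)
  then have m: "i' < p" "r < m i'" "c < n i'" using g by auto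
  have "FF g = j" unfolding g_def by (rule f_the_inv_into_f[OF inj]) (use surj in auto)
  then have j: "j = idx i' r c" using g by simp
  have "emb i Z $ j = (if i' = i then Z r c else 0)"
    unfolding emb_def vec_lambda_beta g_def[symmetric] g by simp
  then have "i' = i" using a by (auto split: if_splits)
  then show ?thesis using m j by blast
qed

lemma blk_emb: "i < p \<Longrightarrow> Z \<in> matsp (m i) (n i) \<Longrightarrow> blk idx (m i) (n i) i (emb i Z) = Z"
  by (auto simp: fun_eq_iff blk_def emb_at matsp_def)

lemma coord_bound:
  assumes i: "i < p"
  shows "\<exists>C\<ge>0. \<forall>Z\<in>matsp (m i) (n i). \<forall>r c. \<bar>Z r c\<bar> \<le> C * nrm i Z"
proof (cases "m i = 0 \<or> n i = 0")
  case True
  then show ?thesis by (auto simp: matsp_def intro!: exI[of _ 0])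
next
  case False
  have nN: "is_norm_on (matsp (m i) (n i)) (nrm i)" using norms i by simp
  define \<nu> where "\<nu> = (\<lambda>x. nrm i (blk idx (m i) (n i) i x))"
  define W where "W = {x::real^'d. \<forall>j. (\<nexists>r c. r < m i \<and> c < n i \<and> j = idx i r c) \<longrightarrow> x $ j = 0}"
  define S where "S = {x::real^'d. norm x = 1} \<inter> W"
  have "closed W"
  proof -
    have "W = (\<Inter>j\<in>{j. \<nexists>r c. r < m i \<and> c < n i \<and> j = idx i r c}. {x::real^'d. x $ j = 0})"
      by (auto simp: W_def)
    moreover have "closed {x::real^'d. x $ j = 0}" for j
      by (rule closed_Collect_eq) (auto intro: continuous_intros)
    ultimately show ?thesis by auto
  qed
  moreover have "closed {x::real^'d. norm x = 1}"
    by (rule closed_Collect_eq) (auto intro: continuous_intros)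
  ultimately have "closed S" by (auto simp: S_def)
  moreover have "bounded S" by (auto simp: S_def bounded_iff)
  ultimately have cS: "compact S" by (simp add: compact_eq_bounded_closed)
  have "axis (idx i 0 0) (1::real) \<in> S"
    using False unfolding S_def W_def by (auto simp: norm_axis_1) (auto simp: axis_def)
  then have neS: "S \<noteq> {}" by auto
  obtain x0 where x0: "x0 \<in> S" and x0min: "\<forall>y\<in>S. \<nu> x0 \<le> \<nu> y"
    using continuous_attains_inf[OF cS neS continuous_on_subset[OF nu_cont[OF i]]] unfolding \<nu>_def by blast
  have "\<nu> x0 \<noteq> 0"
  proof
    assume "\<nu> x0 = 0"
    then have b0: "blk idx (m i) (n i) i x0 = (\<lambda>_ _. 0)"
      using nzero_iff[OF nN matsp_blk] unfolding \<nu>_def by blast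
    have "x0 = 0"
    proof (rule vec_eq_iff[THEN iffD2], rule allI)
      fix j
      show "x0 $ j = 0 $ j"
      proof (cases "\<exists>r c. r < m i \<and> c < n i \<and> j = idx i r c")
        case True
        then obtain r c where "r < m i" "c < n i" "j = idx i r c" by blast
        then show ?thesis using fun_cong[OF fun_cong[OF b0, of r], of c] by (simp add: blk_def)
      next
        case False
        then show ?thesis using x0 by (simp add: S_def W_def)
      qed
    qed
    then show False using x0 by (simp add: S_def)
  qed
  moreover have "\<nu> x0 \<ge> 0" unfolding \<nu>_def by (rule nn[OF nN matsp_blk])
  ultimately have c0: "\<nu> x0 > 0" by simp
  show ?thesis
  proof (intro exI[of _ "1 / \<nu> x0"] conjI ballI allI)
    show "0 \<le> 1 / \<nu> x0" using c0 by simp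
    fix Z r c assume Z: "Z \<in> matsp (m i) (n i)"
    define x where "x = emb i Z"
    have bx: "blk idx (m i) (n i) i x = Z" using blk_emb[OF i Z] by (simp add: x_def)
    have xW: "x \<in> W" unfolding W_def x_def using emb_supp by blast
    have nx: "norm x * \<nu> x0 \<le> nrm i Z"
    proof (cases "x = 0")
      case True then show ?thesis using nn[OF nN Z] by simp
    next
      case False
      then have nxp: "norm x > 0" by simp
      have "(1 / norm x) *\<^sub>R x \<in> S" using xW False by (simp add: S_def W_def)
      then have "\<nu> x0 \<le> \<nu> ((1 / norm x) *\<^sub>R x)" using x0min by blast
      also have "\<dots> = (1 / norm x) * nrm i Z"
        unfolding \<nu>_def blk_scale using nscale[OF nN Z, of "1 / norm x"] bx by simp
      finally show ?thesis using nxp by (simp add: field_simps)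
    qed
    show "\<bar>Z r c\<bar> \<le> 1 / \<nu> x0 * nrm i Z"
    proof (cases "r < m i \<and> c < n i")
      case True
      then have "\<bar>Z r c\<bar> \<le> norm x" using emb_at[OF i] component_le_norm_cart[of x "idx i r c"]
        by (simp add: x_def)
      then have "\<nu> x0 * \<bar>Z r c\<bar> \<le> \<nu> x0 * norm x" using c0 by (simp add: mult_left_mono)
      moreover have "\<nu> x0 * norm x \<le> nrm i Z" using nx by (simp add: mult.commute)
      ultimately have "\<nu> x0 * \<bar>Z r c\<bar> \<le> nrm i Z" by linarith
      then show ?thesis using c0 by (simp add: field_simps)
    next
      case False
      then show ?thesis using Z c0 nn[OF nN Z] by (simp add: matsp_def)
    qed
  qed
qed

lemma dual_bdd:
  assumes i: "i < p"
  shows "bdd_above ((\<lambda>Z. trinner (m i) (n i) Y Z) ` {Z\<in>matsp (m i) (n i). nrm i Z \<le> 1})"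
proof -
  obtain C where C0: "C \<ge> 0" and C: "\<forall>Z\<in>matsp (m i) (n i). \<forall>r c. \<bar>Z r c\<bar> \<le> C * nrm i Z"
    using coord_bound[OF i] by blast
  show ?thesis
  proof (rule bdd_aboveI2)
    fix Z assume Z: "Z \<in> {Z\<in>matsp (m i) (n i). nrm i Z \<le> 1}"
    have "\<bar>Z r c\<bar> \<le> C" for r c
    proof -
      have "\<bar>Z r c\<bar> \<le> C * nrm i Z" using C Z by blast
      also have "\<dots> \<le> C * 1" using Z C0 by (intro mult_left_mono) auto
      finally show ?thesis by simp
    qed
    then have "Y r c * Z r c \<le> \<bar>Y r c\<bar> * C" for r c
    proof -
      have "Y r c * Z r c \<le> \<bar>Y r c\<bar> * \<bar>Z r c\<bar>" by (metis abs_ge_self abs_mult)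
      also have "\<dots> \<le> \<bar>Y r c\<bar> * C" by (rule mult_left_mono) (use \<open>\<And>r c. \<bar>Z r c\<bar> \<le> C\<close> in auto)
      finally show ?thesis .
    qed
    then show "trinner (m i) (n i) Y Z \<le> (\<Sum>c<n i. \<Sum>r<m i. \<bar>Y r c\<bar> * C)"
      unfolding trinner_def by (intro sum_mono) auto
  qed
qed

lemma dual_upper:
  assumes i: "i < p" and Z: "Z \<in> matsp (m i) (n i)" "nrm i Z \<le> 1"
  shows "trinner (m i) (n i) Y Z \<le> dualnorm (m i) (n i) (nrm i) Y"
  unfolding dualnorm_def by (rule cSUP_upper[OF _ dual_bdd[OF i]]) (use Z in auto)

lemma dual_nonneg:
  assumes i: "i < p"
  shows "0 \<le> dualnorm (m i) (n i) (nrm i) Y"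
proof -
  have nN: "is_norm_on (matsp (m i) (n i)) (nrm i)" using norms i by simp
  have "trinner (m i) (n i) Y (\<lambda>_ _. 0) \<le> dualnorm (m i) (n i) (nrm i) Y"
    by (rule dual_upper[OF i matsp_zero]) (simp add: nzero[OF nN])
  then show ?thesis by (simp add: trinner_def)
qed

lemma dual_zero:
  assumes i: "i < p"
  shows "dualnorm (m i) (n i) (nrm i) (\<lambda>_ _. 0) = 0"
proof -
  have nN: "is_norm_on (matsp (m i) (n i)) (nrm i)" using norms i by simp
  have ne: "{Z\<in>matsp (m i) (n i). nrm i Z \<le> 1} \<noteq> {}"
    using matsp_zero nzero[OF nN] by fastforce
  show ?thesis unfolding dualnorm_def trinner_zero using ne by simp
qed

lemma dual_bound:
  assumes i: "i < p" and Z: "Z \<in> matsp (m i) (n i)"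
  shows "trinner (m i) (n i) Y Z \<le> dualnorm (m i) (n i) (nrm i) Y * nrm i Z"
proof -
  have nN: "is_norm_on (matsp (m i) (n i)) (nrm i)" using norms i by simp
  show ?thesis
  proof (cases "nrm i Z = 0")
    case True
    then have "Z = (\<lambda>_ _. 0)" using nzero_iff[OF nN Z] by simp
    then show ?thesis by (simp add: trinner_def nzero[OF nN])
  next
    case False
    then have pos: "nrm i Z > 0" using nn[OF nN Z] by simp
    define W where "W = (\<lambda>r c. (1 / nrm i Z) * Z r c)"
    have W: "W \<in> matsp (m i) (n i)" unfolding W_def by (rule matsp_scale[OF Z])
    have "nrm i W = 1" unfolding W_def using nscale[OF nN Z, of "1 / nrm i Z"] pos by simp
    then have "trinner (m i) (n i) Y W \<le> dualnorm (m i) (n i) (nrm i) Y"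
      using dual_upper[OF i W] by simp
    then have "trinner (m i) (n i) Y Z / nrm i Z \<le> dualnorm (m i) (n i) (nrm i) Y"
      unfolding W_def trinner_scale by simp
    then show ?thesis using pos by (simp add: field_simps)
  qed
qed

end

lemma lmo:
  assumes nN: "is_norm_on (matsp mm nn) N" and t: "t \<ge> 0" and Xi: "Xi \<in> matsp mm nn"
    and opt: "\<forall>Z\<in>matsp mm nn. N (\<lambda>r c. Z r c - Xi r c) \<le> t \<longrightarrow> trinner mm nn G Xi' \<le> trinner mm nn G Z"
  shows "trinner mm nn G Xi' - trinner mm nn G Xi \<le> - t * dualnorm mm nn N G"
proof (cases "t = 0")
  case True
  have "N (\<lambda>r c. Xi r c - Xi r c) \<le> t" using nzero[OF nN] t by simp
  then have "trinner mm nn G Xi' \<le> trinner mm nn G Xi" using opt Xi by blast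
  then show ?thesis using True by simp
next
  case False
  then have tp: "t > 0" using t by simp
  have ne: "{Z\<in>matsp mm nn. N Z \<le> 1} \<noteq> {}"
    using matsp_zero nzero[OF nN] by fastforce
  have "dualnorm mm nn N G \<le> (trinner mm nn G Xi - trinner mm nn G Xi') / t"
    unfolding dualnorm_def
  proof (rule cSUP_least[OF ne])
    fix W assume W: "W \<in> {Z\<in>matsp mm nn. N Z \<le> 1}"
    define Z where "Z = (\<lambda>r c. Xi r c - t * W r c)"
    have Zm: "Z \<in> matsp mm nn" unfolding Z_def using W Xi by (auto intro: matsp_diff matsp_scale)
    have "(\<lambda>r c. Z r c - Xi r c) = (\<lambda>r c. (- t) * W r c)" by (simp add: Z_def fun_eq_iff)
    moreover have "N (\<lambda>r c. (- t) * W r c) = t * N W" using nscale[OF nN, of W "-t"] W t by simp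
    ultimately have "N (\<lambda>r c. Z r c - Xi r c) = t * N W" by simp
    also have "\<dots> \<le> t" using W t by (simp add: mult_left_le)
    finally have "trinner mm nn G Xi' \<le> trinner mm nn G Z" using opt Zm by blast
    also have "\<dots> = trinner mm nn G Xi - t * trinner mm nn G W"
      unfolding Z_def trinner_diff trinner_scale by simp
    finally show "trinner mm nn G W \<le> (trinner mm nn G Xi - trinner mm nn G Xi') / t"
      using tp by (simp add: field_simps)
  qed
  then show ?thesis using tp by (simp add: field_simps)
qed


context lay_setup begin

lemma descent:
  fixes f :: "real ^ 'd \<Rightarrow> real" and grad :: "real ^ 'd \<Rightarrow> real ^ 'd" and L0 L1 :: "nat \<Rightarrow> real"
  assumes deriv: "\<forall>X. (f has_derivative (\<lambda>h. grad X \<bullet> h)) (at X)"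
    and L_nonneg: "\<forall>i<p. L0 i \<ge> 0 \<and> L1 i \<ge> 0"
    and smooth: "\<forall>i<p. \<forall>X Y.
        dualnorm (m i) (n i) (nrm i)
          (\<lambda>r c. blk idx (m i) (n i) i (grad X) r c - blk idx (m i) (n i) i (grad Y) r c)
        \<le> (L0 i + L1 i * dualnorm (m i) (n i) (nrm i) (blk idx (m i) (n i) i (grad X)))
           * nrm i (\<lambda>r c. blk idx (m i) (n i) i X r c - blk idx (m i) (n i) i Y r c)"
  shows "f Y \<le> f X + (\<Sum>i<p. trinner (m i) (n i) (blk idx (m i) (n i) i (grad X)) (blk idx (m i) (n i) i (Y - X))
      + (L0 i + L1 i * dualnorm (m i) (n i) (nrm i) (blk idx (m i) (n i) i (grad X))) / 2
         * (nrm i (blk idx (m i) (n i) i (Y - X)))\<^sup>2)"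
proof -
  define B where "B = (\<lambda>i x. blk idx (m i) (n i) i x)"
  define b where "b = (\<lambda>i. L0 i + L1 i * dualnorm (m i) (n i) (nrm i) (B i (grad X)))"
  define Cc where "Cc = (\<Sum>i<p. b i * (nrm i (B i (Y - X)))\<^sup>2)"
  define \<psi> where "\<psi> = (\<lambda>t. f (X + t *\<^sub>R (Y - X)) - t * (grad X \<bullet> (Y - X)) - t\<^sup>2 / 2 * Cc)"
  have key: "(grad (X + t *\<^sub>R (Y - X)) - grad X) \<bullet> (Y - X) \<le> t * Cc" if t: "0 \<le> t" for t
  proof -
    define Xt where "Xt = X + t *\<^sub>R (Y - X)"
    have "(grad Xt - grad X) \<bullet> (Y - X) = (\<Sum>i<p. trinner (m i) (n i) (B i (grad Xt - grad X)) (B i (Y - X)))"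
      unfolding B_def by (rule inner_blk)
    also have "\<dots> \<le> (\<Sum>i<p. t * (b i * (nrm i (B i (Y - X)))\<^sup>2))"
    proof (rule sum_mono)
      fix i assume "i \<in> {..<p}"
      then have i: "i < p" by simp
      have nN: "is_norm_on (matsp (m i) (n i)) (nrm i)" using norms i by simp
      have "trinner (m i) (n i) (B i (grad Xt - grad X)) (B i (Y - X))
          = trinner (m i) (n i) (B i (grad X - grad Xt)) (B i (X - Y))"
        unfolding trinner_def B_def blk_def by (intro sum.cong refl) (simp add: algebra_simps)
      also have "\<dots> \<le> dualnorm (m i) (n i) (nrm i) (B i (grad X - grad Xt)) * nrm i (B i (X - Y))"
        unfolding B_def by (rule dual_bound[OF i matsp_blk])
      also have "\<dots> \<le> (b i * (t * nrm i (B i (Y - X)))) * nrm i (B i (Y - X))"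
      proof (rule mult_mono)
        have "dualnorm (m i) (n i) (nrm i) (B i (grad X - grad Xt))
           \<le> b i * nrm i (\<lambda>r c. B i X r c - B i Xt r c)"
          using smooth i unfolding b_def B_def blk_diff by blast
        also have "(\<lambda>r c. B i X r c - B i Xt r c) = (\<lambda>r c. t * B i (X - Y) r c)"
          unfolding Xt_def B_def blk_def by (auto simp: fun_eq_iff algebra_simps)
        also have "nrm i (\<lambda>r c. t * B i (X - Y) r c) = t * nrm i (B i (X - Y))"
          unfolding B_def using nscale[OF nN matsp_blk, of t] t by simp
        also have "nrm i (B i (X - Y)) = nrm i (B i (Y - X))"
          unfolding B_def blk_diff by (rule nswap[OF nN matsp_blk matsp_blk])
        finally show "dualnorm (m i) (n i) (nrm i) (B i (grad X - grad Xt)) \<le> b i * (t * nrm i (B i (Y - X)))" .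
        have "nrm i (B i (X - Y)) = nrm i (B i (Y - X))"
          unfolding B_def blk_diff by (rule nswap[OF nN matsp_blk matsp_blk])
        then show "nrm i (B i (X - Y)) \<le> nrm i (B i (Y - X))" by simp
        show "0 \<le> b i * (t * nrm i (B i (Y - X)))"
          using L_nonneg i dual_nonneg[OF i, of "B i (grad X)"] t nn[OF nN matsp_blk, of idx i "Y - X"]
          unfolding b_def B_def by (intro mult_nonneg_nonneg add_nonneg_nonneg) auto
        show "0 \<le> nrm i (B i (X - Y))" unfolding B_def by (rule nn[OF nN matsp_blk])
      qed
      also have "\<dots> = t * (b i * (nrm i (B i (Y - X)))\<^sup>2)" by (simp add: power2_eq_square)
      finally show "trinner (m i) (n i) (B i (grad Xt - grad X)) (B i (Y - X)) \<le> t * (b i * (nrm i (B i (Y - X)))\<^sup>2)" .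
    qed
    also have "\<dots> = t * Cc" unfolding Cc_def by (simp add: sum_distrib_left)
    finally show ?thesis unfolding Xt_def .
  qed
  have der: "DERIV \<psi> t :> grad (X + t *\<^sub>R (Y - X)) \<bullet> (Y - X) - grad X \<bullet> (Y - X) - t * Cc" for t
  proof -
    have l: "((\<lambda>t. X + t *\<^sub>R (Y - X)) has_derivative (\<lambda>s. s *\<^sub>R (Y - X))) (at t)"
      by (auto intro!: derivative_eq_intros)
    have "((\<lambda>t. f (X + t *\<^sub>R (Y - X))) has_derivative (\<lambda>s. grad (X + t *\<^sub>R (Y - X)) \<bullet> (s *\<^sub>R (Y - X)))) (at t)"
      using has_derivative_compose[OF l deriv[rule_format]] .
    then have "DERIV (\<lambda>t. f (X + t *\<^sub>R (Y - X))) t :> grad (X + t *\<^sub>R (Y - X)) \<bullet> (Y - X)"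
      by (rule has_derivative_imp_has_field_derivative) simp
    then show ?thesis unfolding \<psi>_def
      by (auto intro!: derivative_eq_intros)
  qed
  have "\<psi> 1 \<le> \<psi> 0"
  proof (rule DERIV_nonpos_imp_nonincreasing[of 0 1])
    fix t :: real assume "0 \<le> t" "t \<le> 1"
    then show "\<exists>y. DERIV \<psi> t :> y \<and> y \<le> 0"
      using der[of t] key[of t] by (intro exI[of _ _]) (auto simp: inner_diff_left)
  qed simp
  then have "f Y \<le> f X + grad X \<bullet> (Y - X) + Cc / 2" unfolding \<psi>_def by simp
  also have "grad X \<bullet> (Y - X) = (\<Sum>i<p. trinner (m i) (n i) (B i (grad X)) (B i (Y - X)))"
    unfolding B_def by (rule inner_blk)
  finally show ?thesis
    unfolding Cc_def b_def B_def by (simp add: sum.distrib sum_divide_distrib)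
qed

end

lemma sq_sum_ge:
  fixes d :: "nat \<Rightarrow> real"
  assumes "\<forall>i<p. d i \<ge> 0"
  shows "(\<Sum>i<p. (d i)\<^sup>2) \<le> (\<Sum>i<p. d i)\<^sup>2"
  using assms
proof (induction p)
  case 0 then show ?case by simp
next
  case (Suc p)
  have IH: "(\<Sum>i<p. (d i)\<^sup>2) \<le> (\<Sum>i<p. d i)\<^sup>2" using Suc by simp
  have nn: "0 \<le> (\<Sum>i<p. d i)" "0 \<le> d p" using Suc.prems by (auto intro: sum_nonneg)
  have "(\<Sum>i<Suc p. d i)\<^sup>2 = (\<Sum>i<p. d i)\<^sup>2 + 2 * d p * (\<Sum>i<p. d i) + (d p)\<^sup>2"
    by (simp add: power2_eq_square algebra_simps)
  moreover have "0 \<le> 2 * d p * (\<Sum>i<p. d i)" using nn by simp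
  ultimately show ?case using IH by simp
qed

lemma expr_aux:
  fixes x A B y r :: real
  assumes "r > 0"
  shows "x * A / (r * r) + y * B * x / r = x * (A + B * (y * r)) / (r * r)"
  using assms by (simp add: field_simps)

lemma part1_arith:
  fixes \<delta> :: "nat \<Rightarrow> real" and d b h :: "nat \<Rightarrow> nat \<Rightarrow> real" and A B \<mu> \<epsilon> :: real and p :: nat
  assumes \<delta>0: "\<forall>k. \<delta> k \<ge> 0"
    and step: "\<forall>k. \<delta> (Suc k) \<le> \<delta> k - (\<Sum>i<p. h i k)"
    and hlow: "\<forall>k. \<forall>i<p. \<forall>s\<ge>0. s * d i k - s\<^sup>2 * b i k / 2 \<le> h i k"
    and dnn: "\<forall>k. \<forall>i<p. d i k \<ge> 0"
    and bup: "\<forall>k. (\<Sum>i<p. b i k) \<le> A + B * (\<Sum>i<p. d i k)"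
    and PL: "\<forall>k. (\<Sum>i<p. (d i k)\<^sup>2) \<ge> 2 * \<mu> * \<delta> k"
    and mu: "\<mu> > 0" and eps: "\<epsilon> > 0" and A0: "A \<ge> 0" and B0: "B \<ge> 0"
    and K1: "\<lceil>\<delta> 0 * A / (\<mu> * \<epsilon>) + sqrt 2 * B * \<delta> 0 / sqrt (\<mu> * \<epsilon>)\<rceil> \<ge> 1"
  shows "\<exists>k<nat \<lceil>\<delta> 0 * A / (\<mu> * \<epsilon>) + sqrt 2 * B * \<delta> 0 / sqrt (\<mu> * \<epsilon>)\<rceil>. \<delta> k \<le> \<epsilon>"
proof (rule ccontr)
  define K where "K = \<lceil>\<delta> 0 * A / (\<mu> * \<epsilon>) + sqrt 2 * B * \<delta> 0 / sqrt (\<mu> * \<epsilon>)\<rceil>"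
  define N where "N = nat K"
  assume "\<not> ?thesis"
  then have big: "\<forall>k<N. \<delta> k > \<epsilon>" unfolding N_def K_def by auto
  define r where "r = sqrt (\<mu> * \<epsilon>)"
  have r0: "r > 0" unfolding r_def using mu eps by simp
  have rr: "r * r = \<mu> * \<epsilon>" unfolding r_def using mu eps by (simp add: real_sqrt_mult_self)
  define E where "E = sqrt 2 * r"
  have E0: "E > 0" unfolding E_def using r0 by simp
  have EE: "E * E = 2 * \<mu> * \<epsilon>"
  proof -
    have "E * E = (sqrt 2 * sqrt 2) * (r * r)" unfolding E_def by (simp add: algebra_simps)
    then show ?thesis using rr by simp
  qed
  define Q where "Q = A + B * E"
  have expr: "\<delta> 0 * A / (\<mu> * \<epsilon>) + sqrt 2 * B * \<delta> 0 / sqrt (\<mu> * \<epsilon>) = \<delta> 0 * Q / (\<mu> * \<epsilon>)"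
  proof -
    have e1: "sqrt (\<mu> * \<epsilon>) = r" by (simp add: r_def)
    have "\<delta> 0 * A / (\<mu> * \<epsilon>) + sqrt 2 * B * \<delta> 0 / sqrt (\<mu> * \<epsilon>) = \<delta> 0 * A / (r * r) + sqrt 2 * B * \<delta> 0 / r"
      by (simp only: e1 rr)
    also have "\<dots> = \<delta> 0 * (A + B * (sqrt 2 * r)) / (r * r)" by (rule expr_aux[OF r0])
    also have "\<dots> = \<delta> 0 * Q / (\<mu> * \<epsilon>)" by (simp only: Q_def E_def rr)
    finally show ?thesis .
  qed
  have Q0: "Q > 0"
  proof (rule ccontr)
    assume "\<not> Q > 0"
    moreover have "B * E \<ge> 0" using B0 E0 by simp
    ultimately have "Q = 0" unfolding Q_def using A0 by linarith
    then have z: "\<delta> 0 * Q / (\<mu> * \<epsilon>) = 0" by simp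
    from K1 have "1 \<le> \<lceil>\<delta> 0 * Q / (\<mu> * \<epsilon>)\<rceil>" unfolding expr .
    then show False unfolding z by simp
  qed
  define c where "c = \<mu> * \<epsilon> / Q"
  have c0: "c > 0" unfolding c_def using mu eps Q0 by simp
  define s where "s = E / Q"
  have s0: "s > 0" unfolding s_def using E0 Q0 by simp
  have sB: "s * B \<le> 1" proof -
    have "s * B = (E * B) / Q" unfolding s_def by simp
    moreover have "E * B \<le> Q" unfolding Q_def using A0 by simp
    ultimately show ?thesis using Q0 by simp
  qed
  have sE: "s * E - s\<^sup>2 / 2 * Q = c"
    proof -
    have "s * E = E * E / Q" unfolding s_def by simp
    moreover have "s\<^sup>2 / 2 * Q = E * E / Q / 2" unfolding s_def using Q0 by (simp add: power2_eq_square)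
    ultimately have "s * E - s\<^sup>2 / 2 * Q = E * E / Q / 2" by simp
    then show ?thesis unfolding c_def EE by simp
  qed
  have strict: "\<delta> (Suc k) < \<delta> k - c" if k: "k < N" for k
  proof -
    define D where "D = (\<Sum>i<p. d i k)"
    have D0: "D \<ge> 0" unfolding D_def using dnn by (intro sum_nonneg) auto
    have a: "(\<Sum>i<p. (d i k)\<^sup>2) \<le> D\<^sup>2" unfolding D_def by (rule sq_sum_ge) (use dnn in simp)
    have b: "2 * \<mu> * \<delta> k \<le> (\<Sum>i<p. (d i k)\<^sup>2)" using PL by simp
    have c: "2 * \<mu> * \<epsilon> < 2 * \<mu> * \<delta> k" using big k mu by simp
    have "E * E < D * D" using a b c EE unfolding power2_eq_square by linarith
    then have "E\<^sup>2 < D\<^sup>2" by (simp add: power2_eq_square)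
    then have DE: "E < D" using D0 by (simp add: power_less_imp_less_base)
    have f1: "(\<Sum>i<p. s * d i k - s\<^sup>2 * b i k / 2) \<le> (\<Sum>i<p. h i k)"
      by (rule sum_mono) (use hlow s0 in auto)
    have f2: "(\<Sum>i<p. s * d i k - s\<^sup>2 * b i k / 2) = s * D - s\<^sup>2 / 2 * (\<Sum>i<p. b i k)"
      unfolding D_def by (simp add: sum_subtractf sum_distrib_left sum_divide_distrib mult.commute)
    have f3: "s\<^sup>2 / 2 * (\<Sum>i<p. b i k) \<le> s\<^sup>2 / 2 * (A + B * D)"
      unfolding D_def using bup by (intro mult_left_mono) auto
    have f4: "s * D - s\<^sup>2 / 2 * (A + B * D) = (s * E - s\<^sup>2 / 2 * Q) + (D - E) * (s - s\<^sup>2 * B / 2)"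
      unfolding Q_def by (simp add: field_simps power2_eq_square)
    have f5: "(D - E) * (s - s\<^sup>2 * B / 2) > 0"
    proof -
      have "s - s\<^sup>2 * B / 2 = s * (1 - s * B / 2)" by (simp add: algebra_simps power2_eq_square)
      moreover have "s * (1 - s * B / 2) > 0" using s0 sB by simp
      ultimately show ?thesis using DE by simp
    qed
    have "c < c + (D - E) * (s - s\<^sup>2 * B / 2)" using f5 by simp
    also have "\<dots> = s * D - s\<^sup>2 / 2 * (A + B * D)" using f4 sE by simp
    also have "\<dots> \<le> s * D - s\<^sup>2 / 2 * (\<Sum>i<p. b i k)" using f3 by simp
    also have "\<dots> \<le> (\<Sum>i<p. h i k)" using f1 f2 by simp
    finally have hc: "c < (\<Sum>i<p. h i k)" .
    have "\<delta> (Suc k) \<le> \<delta> k - (\<Sum>i<p. h i k)" using step by blast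
    then show ?thesis using hc by linarith
  qed
  have lin: "\<delta> k \<le> \<delta> 0 - real k * c" if "k \<le> N" for k
    using that
  proof (induction k)
    case 0 then show ?case by simp
  next
    case (Suc k)
    have kN: "k < N" using Suc.prems by simp
    have a: "\<delta> (Suc k) < \<delta> k - c" using strict[OF kN] .
    have b: "\<delta> k \<le> \<delta> 0 - real k * c" using Suc.IH kN by simp
    have "real (Suc k) * c = real k * c + c" by (simp add: distrib_right)
    then show ?case using a b by linarith
  qed
  have K1': "1 \<le> K" using K1 unfolding K_def .
  have N1: "N \<ge> 1" using nat_mono[OF K1'] unfolding N_def by simp
  then obtain M where M: "N = Suc M" by (cases N) auto
  have MN: "M < N" "M \<le> N" using M by auto
  have "real N * c = real M * c + c" using M by (simp add: distrib_right)
  moreover have "\<delta> N < \<delta> M - c" using strict[OF MN(1)] M by simp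
  ultimately have "\<delta> N < \<delta> 0 - real N * c"
    using lin[OF MN(2)] by linarith
  then have "real N * c < \<delta> 0" using \<delta>0[rule_format, of N] by linarith
  then have "real N * (\<mu> * \<epsilon>) < \<delta> 0 * Q" unfolding c_def using Q0 by (simp add: field_simps)
  then have "real N < \<delta> 0 * Q / (\<mu> * \<epsilon>)" using mu eps by (simp add: pos_less_divide_eq)
  moreover have "real N = real_of_int K" unfolding N_def using K1' by simp
  moreover have "real_of_int K \<ge> \<delta> 0 * Q / (\<mu> * \<epsilon>)" unfolding K_def expr[symmetric] by linarith
  ultimately show False by simp
qed

lemma part2_arith:
  fixes \<delta> :: "nat \<Rightarrow> real" and d h :: "nat \<Rightarrow> nat \<Rightarrow> real" and L \<mu> \<epsilon> :: real and p :: nat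
  assumes \<delta>0: "\<forall>k. \<delta> k \<ge> 0"
    and step: "\<forall>k. \<delta> (Suc k) \<le> \<delta> k - (\<Sum>i<p. h i k)"
    and hlow: "\<forall>k. \<forall>i<p. (d i k)\<^sup>2 / (2 * L) \<le> h i k"
    and PL: "\<forall>k. (\<Sum>i<p. (d i k)\<^sup>2) \<ge> 2 * \<mu> * \<delta> k"
    and mu: "\<mu> > 0" and eps: "\<epsilon> > 0" and L0: "L > 0"
  shows "\<delta> (nat \<lceil>L / \<mu> * ln (\<delta> 0 / \<epsilon>)\<rceil>) \<le> \<epsilon>"
proof -
  define q where "q = 1 - \<mu> / L"
  have st: "\<delta> (Suc k) \<le> q * \<delta> k" for k
  proof -
    have "(\<Sum>i<p. (d i k)\<^sup>2 / (2 * L)) \<le> (\<Sum>i<p. h i k)" by (rule sum_mono) (use hlow in auto)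
    moreover have "(\<Sum>i<p. (d i k)\<^sup>2 / (2 * L)) = (\<Sum>i<p. (d i k)\<^sup>2) / (2 * L)" by (simp add: sum_divide_distrib)
    moreover have "(\<Sum>i<p. (d i k)\<^sup>2) / (2 * L) \<ge> 2 * \<mu> * \<delta> k / (2 * L)"
      using PL L0 by (intro divide_right_mono) auto
    moreover have "2 * \<mu> * \<delta> k / (2 * L) = \<mu> / L * \<delta> k" by simp
    moreover have "q * \<delta> k = \<delta> k - \<mu> / L * \<delta> k" unfolding q_def by (simp add: algebra_simps)
    moreover have "\<delta> (Suc k) \<le> \<delta> k - (\<Sum>i<p. h i k)" using step by blast
    ultimately show ?thesis by linarith
  qed
  have ex: "\<delta> k \<le> exp (- (\<mu> / L) * real k) * \<delta> 0" for k
  proof (induction k)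
    case 0 then show ?case by simp
  next
    case (Suc k)
    show ?case
    proof (cases "q \<ge> 0")
      case True
      have "\<delta> (Suc k) \<le> q * (exp (- (\<mu> / L) * real k) * \<delta> 0)"
        using st[of k] Suc True by (meson mult_left_mono order_trans)
      also have "\<dots> \<le> exp (- (\<mu> / L)) * (exp (- (\<mu> / L) * real k) * \<delta> 0)"
        using exp_ge_add_one_self[of "- (\<mu> / L)"] \<delta>0 unfolding q_def
        by (intro mult_right_mono) auto
      also have "\<dots> = exp (- (\<mu> / L) * real (Suc k)) * \<delta> 0"
        by (simp add: algebra_simps flip: exp_add)
      finally show ?thesis .
    next
      case False
      have "q * \<delta> k \<le> 0" using False \<delta>0[rule_format, of k] by (simp add: mult_nonpos_nonneg)
      then have "\<delta> (Suc k) \<le> 0" using st[of k] by linarith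
      moreover have "0 \<le> exp (- (\<mu> / L) * real (Suc k)) * \<delta> 0" using \<delta>0[rule_format, of 0] by simp
      ultimately show ?thesis by linarith
    qed
  qed
  define N where "N = nat \<lceil>L / \<mu> * ln (\<delta> 0 / \<epsilon>)\<rceil>"
  show ?thesis
  proof (cases "\<delta> 0 \<le> \<epsilon>")
    case True
    have "exp (- (\<mu> / L) * real N) \<le> 1" using mu L0 by simp
    then have "exp (- (\<mu> / L) * real N) * \<delta> 0 \<le> \<delta> 0" using \<delta>0 by (simp add: mult_left_le_one_le)
    then show ?thesis using ex[of N] True unfolding N_def by linarith
  next
    case False
    then have d0: "\<delta> 0 > 0" using eps by simp
    have "real N \<ge> L / \<mu> * ln (\<delta> 0 / \<epsilon>)" unfolding N_def by linarith
    then have "\<mu> / L * real N \<ge> ln (\<delta> 0 / \<epsilon>)" using mu L0 by (simp add: field_simps)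
    then have "exp (- (\<mu> / L) * real N) \<le> exp (- ln (\<delta> 0 / \<epsilon>))" by simp
    also have "\<dots> = \<epsilon> / \<delta> 0" using d0 eps by (simp add: exp_minus)
    finally have "exp (- (\<mu> / L) * real N) * \<delta> 0 \<le> \<epsilon> / \<delta> 0 * \<delta> 0"
      using d0 by (intro mult_right_mono) auto
    then show ?thesis using ex[of N] d0 unfolding N_def by simp
  qed
qed


theorem theorem4:
  fixes p :: nat and m n :: "nat \<Rightarrow> nat"
    and idx :: "nat \<Rightarrow> nat \<Rightarrow> nat \<Rightarrow> 'd::finite"
    and nrm :: "nat \<Rightarrow> (nat \<Rightarrow> nat \<Rightarrow> real) \<Rightarrow> real"
    and f :: "real ^ 'd \<Rightarrow> real" and grad :: "real ^ 'd \<Rightarrow> real ^ 'd"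
    and L0 L1 :: "nat \<Rightarrow> real" and \<mu> \<epsilon> :: real
    and Xs :: "nat \<Rightarrow> real ^ 'd"
  assumes p_pos: "p \<ge> 1"
    and lay: "layout p m n idx"
    and norms: "\<forall>i<p. is_norm_on (matsp (m i) (n i)) (nrm i)"
    and deriv: "\<forall>X. (f has_derivative (\<lambda>h. grad X \<bullet> h)) (at X)"
    and C1: "continuous_on UNIV grad"
    and bdd: "bdd_below (range f)"
    and L_nonneg: "\<forall>i<p. L0 i \<ge> 0 \<and> L1 i \<ge> 0"
    and smooth: "\<forall>i<p. \<forall>X Y.
        dualnorm (m i) (n i) (nrm i)
          (\<lambda>r c. blk idx (m i) (n i) i (grad X) r c - blk idx (m i) (n i) i (grad Y) r c)
        \<le> (L0 i + L1 i * dualnorm (m i) (n i) (nrm i) (blk idx (m i) (n i) i (grad X)))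
           * nrm i (\<lambda>r c. blk idx (m i) (n i) i X r c - blk idx (m i) (n i) i Y r c)"
    and mu_pos: "\<mu> > 0"
    and PL: "\<forall>X. (\<Sum>i<p. (dualnorm (m i) (n i) (nrm i) (blk idx (m i) (n i) i (grad X)))\<^sup>2)
                 \<ge> 2 * \<mu> * (f X - Inf (range f))"
    and eps_pos: "\<epsilon> > 0"
    and well_def: "\<forall>k. \<forall>i<p. blk idx (m i) (n i) i (grad (Xs k)) \<noteq> (\<lambda>_ _. 0) \<longrightarrow>
        L0 i + L1 i * dualnorm (m i) (n i) (nrm i) (blk idx (m i) (n i) i (grad (Xs k))) > 0"
    and gluon: "\<forall>k. \<forall>i<p.
        (let G = blk idx (m i) (n i) i (grad (Xs k));
             d = dualnorm (m i) (n i) (nrm i) G;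
             t = (if G = (\<lambda>_ _. 0) then 0 else d / (L0 i + L1 i * d));
             Xi = blk idx (m i) (n i) i (Xs k);
             Xi' = blk idx (m i) (n i) i (Xs (Suc k))
         in nrm i (\<lambda>r c. Xi' r c - Xi r c) \<le> t \<and>
            (\<forall>Z\<in>matsp (m i) (n i). nrm i (\<lambda>r c. Z r c - Xi r c) \<le> t \<longrightarrow>
                 trinner (m i) (n i) G Xi' \<le> trinner (m i) (n i) G Z))"
  shows
    "(let fstar = Inf (range f);
          \<Delta>0 = f (Xs 0) - fstar;
          L1max = Max (L1 ` {..<p});
          K = \<lceil>\<Delta>0 * (\<Sum>i<p. L0 i) / (\<mu> * \<epsilon>) + sqrt 2 * L1max * \<Delta>0 / sqrt (\<mu> * \<epsilon>)\<rceil>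
      in K \<ge> 1 \<longrightarrow> (MIN k\<in>{0..<nat K}. f (Xs k)) - fstar \<le> \<epsilon>)
   \<and> ((\<forall>i<p. L1 i = 0) \<longrightarrow>
      (let fstar = Inf (range f);
           \<Delta>0 = f (Xs 0) - fstar;
           L0max = Max (L0 ` {..<p});
           K = \<lceil>L0max / \<mu> * ln (\<Delta>0 / \<epsilon>)\<rceil>
       in f (Xs (nat K)) - fstar \<le> \<epsilon>))"
proof -
  interpret L: lay_setup p m n idx nrm by (rule lay_setup.intro[OF lay norms])
  define fstar where "fstar = Inf (range f)"
  define \<delta> where "\<delta> = (\<lambda>k. f (Xs k) - fstar)"
  define G where "G = (\<lambda>i k. blk idx (m i) (n i) i (grad (Xs k)))"
  define d where "d = (\<lambda>i k. dualnorm (m i) (n i) (nrm i) (G i k))"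
  define b where "b = (\<lambda>i k. L0 i + L1 i * d i k)"
  define h where "h = (\<lambda>i k. if G i k = (\<lambda>_ _. 0) then 0 else (d i k)\<^sup>2 / (2 * b i k))"
  have \<delta>0: "\<forall>k. \<delta> k \<ge> 0"
    unfolding \<delta>_def fstar_def using cInf_lower[OF rangeI bdd] by simp
  have dnn: "\<forall>k. \<forall>i<p. d i k \<ge> 0" unfolding d_def using L.dual_nonneg by blast
  have G0d: "d i k = 0" if "i < p" "G i k = (\<lambda>_ _. 0)" for i k
    unfolding d_def using that L.dual_zero by simp
  have bpos: "b i k > 0" if "i < p" "G i k \<noteq> (\<lambda>_ _. 0)" for i k
    using well_def that unfolding b_def d_def G_def by blast
  have bnn: "b i k \<ge> 0" if "i < p" for i k
    using L_nonneg dnn that unfolding b_def by (simp add: add_nonneg_nonneg)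
  have PL': "\<forall>k. (\<Sum>i<p. (d i k)\<^sup>2) \<ge> 2 * \<mu> * \<delta> k"
    unfolding d_def G_def \<delta>_def fstar_def using PL by blast
  have each: "trinner (m i) (n i) (G i k) (blk idx (m i) (n i) i (Xs (Suc k) - Xs k))
      + b i k / 2 * (nrm i (blk idx (m i) (n i) i (Xs (Suc k) - Xs k)))\<^sup>2 \<le> - h i k"
    if i: "i < p" for i k
  proof -
    have nN: "is_norm_on (matsp (m i) (n i)) (nrm i)" using norms i by simp
    define Xi where "Xi = blk idx (m i) (n i) i (Xs k)"
    define Xi' where "Xi' = blk idx (m i) (n i) i (Xs (Suc k))"
    define t where "t = (if G i k = (\<lambda>_ _. 0) then 0 else d i k / (L0 i + L1 i * d i k))"
    have gl: "nrm i (\<lambda>r c. Xi' r c - Xi r c) \<le> t \<and>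
            (\<forall>Z\<in>matsp (m i) (n i). nrm i (\<lambda>r c. Z r c - Xi r c) \<le> t \<longrightarrow>
                 trinner (m i) (n i) (G i k) Xi' \<le> trinner (m i) (n i) (G i k) Z)"
      using gluon i unfolding Let_def Xi_def Xi'_def t_def d_def G_def by blast
    have bd: "blk idx (m i) (n i) i (Xs (Suc k) - Xs k) = (\<lambda>r c. Xi' r c - Xi r c)"
      unfolding Xi_def Xi'_def by (rule blk_diff)
    have t0: "t \<ge> 0"
    proof (cases "G i k = (\<lambda>_ _. 0)")
      case True then show ?thesis unfolding t_def by simp
    next
      case False
      have "0 < L0 i + L1 i * d i k" using bpos[OF i False] unfolding b_def .
      moreover have "0 \<le> d i k" using dnn i by blast
      ultimately show ?thesis unfolding t_def using False by simp
    qed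
    have lm: "trinner (m i) (n i) (G i k) Xi' - trinner (m i) (n i) (G i k) Xi \<le> - t * d i k"
      unfolding d_def by (rule lmo[OF nN t0]) (use gl in \<open>auto simp: Xi_def matsp_blk\<close>)
    have tr: "trinner (m i) (n i) (G i k) (\<lambda>r c. Xi' r c - Xi r c) = trinner (m i) (n i) (G i k) Xi' - trinner (m i) (n i) (G i k) Xi"
      by (rule trinner_diff)
    have Nn: "0 \<le> nrm i (\<lambda>r c. Xi' r c - Xi r c)"
      by (rule nn[OF nN]) (auto simp: Xi_def Xi'_def intro: matsp_diff matsp_blk)
    show ?thesis
    proof (cases "G i k = (\<lambda>_ _. 0)")
      case True
      then have "t = 0" "h i k = 0" unfolding t_def h_def by auto
      then have "nrm i (\<lambda>r c. Xi' r c - Xi r c) = 0" using gl Nn by simp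
      then show ?thesis unfolding bd using lm tr \<open>t = 0\<close> \<open>h i k = 0\<close> by simp
    next
      case False
      have bp: "b i k > 0" using bpos[OF i False] .
      have tt: "t = d i k / b i k" unfolding t_def b_def using False by simp
      have hh: "h i k = (d i k)\<^sup>2 / (2 * b i k)" unfolding h_def using False by simp
      have sq: "(nrm i (\<lambda>r c. Xi' r c - Xi r c))\<^sup>2 \<le> t\<^sup>2"
        using gl Nn by (intro power_mono) auto
      have "trinner (m i) (n i) (G i k) (\<lambda>r c. Xi' r c - Xi r c) + b i k / 2 * (nrm i (\<lambda>r c. Xi' r c - Xi r c))\<^sup>2
          \<le> - t * d i k + b i k / 2 * t\<^sup>2"
        using lm tr sq bp by (intro add_mono mult_left_mono) auto
      also have "\<dots> = - h i k" unfolding tt hh using bp by (simp add: field_simps power2_eq_square)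
      finally show ?thesis unfolding bd .
    qed
  qed
  have step: "\<forall>k. \<delta> (Suc k) \<le> \<delta> k - (\<Sum>i<p. h i k)"
  proof
    fix k
    have "f (Xs (Suc k)) \<le> f (Xs k) + (\<Sum>i<p. trinner (m i) (n i) (G i k) (blk idx (m i) (n i) i (Xs (Suc k) - Xs k))
      + b i k / 2 * (nrm i (blk idx (m i) (n i) i (Xs (Suc k) - Xs k)))\<^sup>2)"
      using L.descent[OF deriv L_nonneg smooth, of "Xs (Suc k)" "Xs k"] unfolding b_def d_def G_def .
    also have "(\<Sum>i<p. trinner (m i) (n i) (G i k) (blk idx (m i) (n i) i (Xs (Suc k) - Xs k))
      + b i k / 2 * (nrm i (blk idx (m i) (n i) i (Xs (Suc k) - Xs k)))\<^sup>2) \<le> (\<Sum>i<p. - h i k)"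
      by (rule sum_mono) (use each in simp)
    finally show "\<delta> (Suc k) \<le> \<delta> k - (\<Sum>i<p. h i k)" unfolding \<delta>_def by (simp add: sum_negf)
  qed
  have part1: "(let fstar = Inf (range f);
          \<Delta>0 = f (Xs 0) - fstar;
          L1max = Max (L1 ` {..<p});
          K = \<lceil>\<Delta>0 * (\<Sum>i<p. L0 i) / (\<mu> * \<epsilon>) + sqrt 2 * L1max * \<Delta>0 / sqrt (\<mu> * \<epsilon>)\<rceil>
      in K \<ge> 1 \<longrightarrow> (MIN k\<in>{0..<nat K}. f (Xs k)) - fstar \<le> \<epsilon>)"
  proof -
    define A where "A = (\<Sum>i<p. L0 i)"
    define B where "B = Max (L1 ` {..<p})"
    have A0: "A \<ge> 0" unfolding A_def using L_nonneg by (intro sum_nonneg) auto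
    have L1B: "L1 i \<le> B" if "i < p" for i unfolding B_def using that by (intro Max_ge) auto
    have B0: "B \<ge> 0" using L1B[of 0] L_nonneg p_pos by force
    have hlow: "\<forall>k. \<forall>i<p. \<forall>s\<ge>0. s * d i k - s\<^sup>2 * b i k / 2 \<le> h i k"
    proof (intro allI impI)
      fix k i and s :: real assume i: "i < p" and s: "s \<ge> 0"
      show "s * d i k - s\<^sup>2 * b i k / 2 \<le> h i k"
      proof (cases "G i k = (\<lambda>_ _. 0)")
        case True
        then show ?thesis using G0d[OF i True] bnn[OF i] unfolding h_def by simp
      next
        case False
        have bp: "b i k > 0" using bpos[OF i False] .
        have "(d i k - s * b i k)\<^sup>2 / (2 * b i k) \<ge> 0" using bp by simp
        moreover have "(d i k - s * b i k)\<^sup>2 / (2 * b i k) = (d i k)\<^sup>2 / (2 * b i k) - (s * d i k - s\<^sup>2 * b i k / 2)"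
          using bp by (simp add: field_simps power2_eq_square)
        ultimately show ?thesis unfolding h_def using False by simp
      qed
    qed
    have bup: "\<forall>k. (\<Sum>i<p. b i k) \<le> A + B * (\<Sum>i<p. d i k)"
    proof
      fix k
      have "(\<Sum>i<p. b i k) = A + (\<Sum>i<p. L1 i * d i k)" unfolding b_def A_def by (simp add: sum.distrib)
      also have "(\<Sum>i<p. L1 i * d i k) \<le> (\<Sum>i<p. B * d i k)"
        by (rule sum_mono) (use L1B dnn in \<open>auto intro: mult_right_mono\<close>)
      finally show "(\<Sum>i<p. b i k) \<le> A + B * (\<Sum>i<p. d i k)" by (simp add: sum_distrib_left)
    qed
    show ?thesis unfolding Let_def
    proof
      assume K1: "1 \<le> \<lceil>(f (Xs 0) - Inf (range f)) * (\<Sum>i<p. L0 i) / (\<mu> * \<epsilon>) + sqrt 2 * Max (L1 ` {..<p}) * (f (Xs 0) - Inf (range f)) / sqrt (\<mu> * \<epsilon>)\<rceil>"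
      have "\<exists>k<nat \<lceil>\<delta> 0 * A / (\<mu> * \<epsilon>) + sqrt 2 * B * \<delta> 0 / sqrt (\<mu> * \<epsilon>)\<rceil>. \<delta> k \<le> \<epsilon>"
        using part1_arith[OF \<delta>0 step hlow dnn bup PL' mu_pos eps_pos A0 B0] K1 unfolding \<delta>_def fstar_def A_def B_def by simp
      then obtain k where k: "k < nat \<lceil>(f (Xs 0) - Inf (range f)) * (\<Sum>i<p. L0 i) / (\<mu> * \<epsilon>) + sqrt 2 * Max (L1 ` {..<p}) * (f (Xs 0) - Inf (range f)) / sqrt (\<mu> * \<epsilon>)\<rceil>"
        and kd: "\<delta> k \<le> \<epsilon>"
        unfolding \<delta>_def fstar_def A_def B_def by blast
      have "(MIN k\<in>{0..<nat \<lceil>(f (Xs 0) - Inf (range f)) * (\<Sum>i<p. L0 i) / (\<mu> * \<epsilon>) + sqrt 2 * Max (L1 ` {..<p}) * (f (Xs 0) - Inf (range f)) / sqrt (\<mu> * \<epsilon>)\<rceil>}. f (Xs k)) \<le> f (Xs k)"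
        using k by (intro Min_le) auto
      then show "(MIN k\<in>{0..<nat \<lceil>(f (Xs 0) - Inf (range f)) * (\<Sum>i<p. L0 i) / (\<mu> * \<epsilon>) + sqrt 2 * Max (L1 ` {..<p}) * (f (Xs 0) - Inf (range f)) / sqrt (\<mu> * \<epsilon>)\<rceil>}. f (Xs k)) - Inf (range f) \<le> \<epsilon>"
        using kd unfolding \<delta>_def fstar_def by simp
    qed
  qed
  have part2: "(\<forall>i<p. L1 i = 0) \<longrightarrow>
      (let fstar = Inf (range f);
           \<Delta>0 = f (Xs 0) - fstar;
           L0max = Max (L0 ` {..<p});
           K = \<lceil>L0max / \<mu> * ln (\<Delta>0 / \<epsilon>)\<rceil>
       in f (Xs (nat K)) - fstar \<le> \<epsilon>)"
  proof
    assume L10: "\<forall>i<p. L1 i = 0"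
    define Lm where "Lm = Max (L0 ` {..<p})"
    have L0L: "L0 i \<le> Lm" if "i < p" for i unfolding Lm_def using that by (intro Max_ge) auto
    have bL: "b i k = L0 i" if "i < p" for i k unfolding b_def using L10 that by simp
    show "let fstar = Inf (range f);
           \<Delta>0 = f (Xs 0) - fstar;
           L0max = Max (L0 ` {..<p});
           K = \<lceil>L0max / \<mu> * ln (\<Delta>0 / \<epsilon>)\<rceil>
       in f (Xs (nat K)) - fstar \<le> \<epsilon>"
    proof (cases "Lm > 0")
      case True
      have hlow: "\<forall>k. \<forall>i<p. (d i k)\<^sup>2 / (2 * Lm) \<le> h i k"
      proof (intro allI impI)
        fix k i assume i: "i < p"
        show "(d i k)\<^sup>2 / (2 * Lm) \<le> h i k"
        proof (cases "G i k = (\<lambda>_ _. 0)")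
          case True
          then show ?thesis using G0d[OF i True] unfolding h_def by simp
        next
          case False
          have bp: "b i k > 0" using bpos[OF i False] .
          have "(d i k)\<^sup>2 / (2 * Lm) \<le> (d i k)\<^sup>2 / (2 * b i k)"
            using bp L0L[OF i] bL[OF i] by (intro divide_left_mono) auto
          then show ?thesis unfolding h_def using False by simp
        qed
      qed
      have "\<delta> (nat \<lceil>Lm / \<mu> * ln (\<delta> 0 / \<epsilon>)\<rceil>) \<le> \<epsilon>"
        by (rule part2_arith[OF \<delta>0 step hlow PL' mu_pos eps_pos True])
      then show ?thesis unfolding Let_def \<delta>_def fstar_def Lm_def .
    next
      case False
      have L00: "L0 i = 0" if "i < p" for i
      proof -
        have "0 \<le> L0 i" using L_nonneg that by blast
        then show ?thesis using L0L[OF that] False by linarith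
      qed
      have Gz: "G i k = (\<lambda>_ _. 0)" if "i < p" for i k
      proof (rule ccontr)
        assume "G i k \<noteq> (\<lambda>_ _. 0)"
        then have "b i k > 0" by (rule bpos[OF that])
        moreover have "b i k = 0" using bL[OF that] L00[OF that] by simp
        ultimately show False by simp
      qed
      have dz: "d i k = 0" if "i < p" for i k using G0d[OF that Gz[OF that]] .
      have "\<delta> k \<le> 0" for k
      proof -
        have "(\<Sum>i<p. (d i k)\<^sup>2) = 0" by (rule sum.neutral) (simp add: dz)
        then have a: "2 * \<mu> * \<delta> k \<le> 0" using PL'[rule_format, of k] by simp
        have "0 < 2 * \<mu>" using mu_pos by simp
        then show ?thesis using a by (simp add: mult_le_0_iff)
      qed
      then have "\<delta> (nat \<lceil>Lm / \<mu> * ln (\<delta> 0 / \<epsilon>)\<rceil>) \<le> \<epsilon>" using eps_pos by (meson less_le_not_le order_trans)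
      then show ?thesis unfolding Let_def \<delta>_def fstar_def Lm_def .
    qed
  qed
  show ?thesis using part1 part2 by blast
qed

end
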